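(* Let $K\subset\mathbb{R}^m$ be a proper cone which is an $\mathbb{R}^m_+$-isotone projection set. Then exactly one of the following alternatives holds: (1) $K\subset\mathbb{R}^m_+$; (2) $\operatorname{int}(K^* )\cap\mathbb{R}^m_+=\varnothing$.
   Context: $\mathbb{R}^m$ carries the standard inner product and a Cartesian coordinate system; $\mathbb{R}^m_+=\{x:x^i\ge0,\ i=1,\dots,m\}$ and $x\le_{\mathbb{R}^m_+}y$ means $x^i\le y^i$ for all $i$. A proper cone is a closed convex cone that is pointed ($K\cap(-K)=\{0\}$) and generating ($K-K=\mathbb{R}^m$). $K^*=\{y:\langle x,y\rangle\ge0\ \forall x\in K\}$. $K$ is an $\mathbb{R}^m_+$-isotone projection set if $x\le_{\mathbb{R}^m_+}y$ implies $P_Kx\le_{\mathbb{R}^m_+}P_Ky$, where $P_K$ is the metric projection onto $K$. *)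

theory Defs
  imports "HOL-Analysis.Analysis"
begin

definition nonneg_orthant :: "(real ^ 'm) set" where
  "nonneg_orthant = {x. \<forall>i. 0 \<le> x $ i}"

definition orthant_le :: "real ^ 'm \<Rightarrow> real ^ 'm \<Rightarrow> bool" where
  "orthant_le x y \<longleftrightarrow> (\<forall>i. x $ i \<le> y $ i)"

definition proper_cone :: "(real ^ 'm) set \<Rightarrow> bool" where
  "proper_cone K \<longleftrightarrow> closed K \<and> convex K \<and> cone K
     \<and> K \<inter> uminus ` K = {0} \<and> {x - y | x y. x \<in> K \<and> y \<in> K} = UNIV"

definition dual_cone :: "(real ^ 'm) set \<Rightarrow> (real ^ 'm) set" where
  "dual_cone K = {y. \<forall>x\<in>K. 0 \<le> inner x y}"

definition isotone_projection_set :: "(real ^ 'm) set \<Rightarrow> bool" where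
  "isotone_projection_set K \<longleftrightarrow>
     (\<forall>x y. orthant_le x y \<longrightarrow> orthant_le (closest_point K x) (closest_point K y))"

end

theory Submission
  imports Defs
begin

lemma inner_nonneg_vec:
  fixes x w :: "real ^ 'm"
  assumes "\<And>i. 0 \<le> x $ i" "\<And>i. 0 \<le> w $ i"
  shows "0 \<le> inner x w"
  unfolding inner_vec_def using assms by (auto intro!: sum_nonneg)

lemma inner_nonpos_vec:
  fixes x w :: "real ^ 'm"
  assumes "\<And>i. x $ i \<le> 0" "\<And>i. 0 \<le> w $ i"
  shows "inner x w \<le> 0"
  unfolding inner_vec_def using assms by (auto intro!: sum_nonpos simp: mult_nonpos_nonneg)

theorem corollary3:
  fixes K :: "(real ^ 'm) set"
  assumes "proper_cone K" and "isotone_projection_set K"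
  shows "(K \<subseteq> nonneg_orthant) \<noteq> (interior (dual_cone K) \<inter> nonneg_orthant = {})"
proof -
  have cl: "closed K" and cv: "convex K" and cn: "cone K" and pt: "K \<inter> uminus ` K = {0}"
    using assms(1) unfolding proper_cone_def by auto
  have K0: "0 \<in> K" using pt by auto
  have P0: "closest_point K 0 = 0" using K0 by (rule closest_point_self)
  have d1: "interior (dual_cone K) \<inter> nonneg_orthant \<noteq> {}" if A: "K \<subseteq> nonneg_orthant"
  proof -
    let ?one = "(\<chi> i. 1) :: real ^ 'm"
    have "ball ?one 1 \<subseteq> dual_cone K"
    proof
      fix w assume w: "w \<in> ball ?one 1"
      have "0 \<le> w $ i" for i
      proof -
        have "\<bar>(?one - w) $ i\<bar> \<le> norm (?one - w)" by (rule component_le_norm_cart)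
        also have "\<dots> < 1" using w by (simp add: dist_norm)
        finally show ?thesis by simp
      qed
      then show "w \<in> dual_cone K" unfolding dual_cone_def
        using A by (auto simp: nonneg_orthant_def intro!: inner_nonneg_vec)
    qed
    then have "?one \<in> interior (dual_cone K)"
      by (meson centre_in_ball interior_maximal open_ball subsetD zero_less_one)
    moreover have "?one \<in> nonneg_orthant" by (simp add: nonneg_orthant_def)
    ultimately show ?thesis by blast
  qed
  have d2: "K \<subseteq> nonneg_orthant" if B: "interior (dual_cone K) \<inter> nonneg_orthant \<noteq> {}"
  proof -
    obtain u where uI: "u \<in> interior (dual_cone K)" and uN: "u \<in> nonneg_orthant" using B by blast
    obtain e where e: "e > 0" "ball u e \<subseteq> dual_cone K"
      using uI by (meson mem_interior)
    have pos: "inner v u > 0" if "v \<in> K" "v \<noteq> 0" for v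
    proof -
      let ?w = "u - ((e/2) / norm v) *\<^sub>R v"
      have nv: "norm v > 0" using that by simp
      have "dist u ?w = e/2" using nv e by (simp add: dist_norm)
      then have "?w \<in> dual_cone K" using e by auto
      then have "0 \<le> inner v ?w" using that unfolding dual_cone_def by auto
      also have "inner v ?w = inner v u - ((e/2) / norm v) * inner v v"
        by (simp add: inner_diff_right)
      also have "inner v v = norm v * norm v"
        by (metis power2_eq_square power2_norm_eq_inner)
      also have "((e/2) / norm v) * (norm v * norm v) = (e/2) * norm v"
        using nv by (simp add: field_simps)
      finally have "0 \<le> inner v u - (e/2) * norm v" .
      moreover have "(e/2) * norm v > 0" using e nv by simp
      ultimately show ?thesis by linarith
    qed
    show ?thesis
    proof
      fix k assume kK: "k \<in> K"
      have "0 \<le> k $ i" for i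
      proof -
        let ?y = "axis i (-1::real) :: real ^ 'm"
        have le: "orthant_le ?y 0" unfolding orthant_le_def by (simp add: axis_def)
        then have "orthant_le (closest_point K ?y) 0"
          using assms(2) P0 unfolding isotone_projection_set_def by metis
        then have np: "\<And>j. closest_point K ?y $ j \<le> 0" unfolding orthant_le_def by simp
        have inK: "closest_point K ?y \<in> K" using closest_point_in_set[OF cl] K0 by blast
        have Pz: "closest_point K ?y = 0"
        proof (rule ccontr)
          assume "closest_point K ?y \<noteq> 0"
          then have "inner (closest_point K ?y) u > 0" using pos inK by blast
          moreover have "inner (closest_point K ?y) u \<le> 0"
            using np uN by (auto simp: nonneg_orthant_def intro!: inner_nonpos_vec)
          ultimately show False by simp
        qed
        have "inner (?y - closest_point K ?y) (k - closest_point K ?y) \<le> 0"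
          by (rule closest_point_dot[OF cv cl kK])
        then have "inner ?y k \<le> 0" using Pz by simp
        then show ?thesis by (simp add: inner_commute inner_axis)
      qed
      then show "k \<in> nonneg_orthant" by (simp add: nonneg_orthant_def)
    qed
  qed
  show ?thesis using d1 d2 by blast
qed

end
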